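(* Let $n\geq 3$, $d\geq 2$ and $\ell\in\textup{int}(C_n)$. The map $\varphi_d:M_d(\ell)\to M_{d+1}(\ell)$ is surjective if and only if $d\geq n-1$.
   Context: $C_n$ is the set of $\ell=(l_1,\ldots,l_n)\in\mathbb{R}^n$ with $l_i>0$ and $l_i\leq\sum_{j\neq i}l_j$ for all $i$; $\textup{int}(C_n)$ is its interior. $V_d(\ell)=\{(\mathbf{v}_1,\ldots,\mathbf{v}_{n-1})\in(\mathbb{R}^d)^{n-1} : \|\mathbf{v}_i-\mathbf{v}_{i-1}\|=l_i,\ i=1,\ldots,n\}$ with $\mathbf{v}_0=\mathbf{v}_n=\mathbf{0}$; $M_d(\ell)=V_d(\ell)/SO(d)$ with $SO(d)$ acting diagonally, $[P]$ the class of $P$. For a fixed linear Euclidean isometry $f_d:\mathbb{R}^d\to\mathbb{R}^{d+1}$, $F_d(\mathbf{v}_1,\ldots,\mathbf{v}_{n-1})=(f_d(\mathbf{v}_1),\ldots,f_d(\mathbf{v}_{n-1}))$ and $\varphi_d([P])=[F_d(P)]$. *)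

theory Defs
  imports "HOL-Analysis.Analysis"
begin

text \<open>Side lengths l = (l_1,...,l_n) are represented as l :: nat => real, only the
values l 1, ..., l n matter.  Interior of C_n: all l_i > 0 and strict polygon inequalities.\<close>
definition int_C :: "nat \<Rightarrow> (nat \<Rightarrow> real) \<Rightarrow> bool" where
  "int_C n l \<longleftrightarrow> (\<forall>i\<in>{1..n}. 0 < l i \<and> l i < (\<Sum>j\<in>{1..n} - {i}. l j))"

text \<open>Closed polygons in a Euclidean space: a polygon is a vertex sequence v with
v 0 = v n = 0 (and v i = 0 for i >= n, for extensionality); the free vertices are
v 1, ..., v (n-1).\<close>
definition polygon_space :: "nat \<Rightarrow> (nat \<Rightarrow> real) \<Rightarrow> (nat \<Rightarrow> 'a::euclidean_space) set" where
  "polygon_space n l = {v. v 0 = 0 \<and> (\<forall>i\<ge>n. v i = 0) \<and>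
                          (\<forall>i\<in>{1..n}. dist (v i) (v (i - 1)) = l i)}"

definition SO :: "(real^'d^'d) set" where
  "SO = {A. orthogonal_matrix A \<and> det A = 1}"

definition so_rel :: "nat \<Rightarrow> (nat \<Rightarrow> real) \<Rightarrow> ((nat \<Rightarrow> real^'d) \<times> (nat \<Rightarrow> real^'d)) set" where
  "so_rel n l = {(P, Q). P \<in> polygon_space n l \<and> Q \<in> polygon_space n l \<and>
                          (\<exists>A\<in>SO. Q = (\<lambda>i. A *v P i))}"

definition moduli_space :: "nat \<Rightarrow> (nat \<Rightarrow> real) \<Rightarrow> (nat \<Rightarrow> real^'d) set set" where
  "moduli_space n l = polygon_space n l // so_rel n l"

definition lin_isometry :: "('a::real_normed_vector \<Rightarrow> 'b::real_normed_vector) \<Rightarrow> bool" where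
  "lin_isometry f \<longleftrightarrow> linear f \<and> (\<forall>x. norm (f x) = norm x)"

definition phi :: "nat \<Rightarrow> (nat \<Rightarrow> real) \<Rightarrow> (real^'d \<Rightarrow> real^'e)
                   \<Rightarrow> (nat \<Rightarrow> real^'d) set \<Rightarrow> (nat \<Rightarrow> real^'e) set" where
  "phi n l f X = the_elem ((\<lambda>P. so_rel n l `` {(\<lambda>i. f (P i))}) ` X)"

end

theory Submission
  imports Defs
begin

lemma SO_id: "mat 1 \<in> SO"
  by (simp add: SO_def orthogonal_matrix_id det_I)

lemma SO_transpose: "A \<in> SO \<Longrightarrow> transpose A \<in> SO"
  by (simp add: SO_def orthogonal_matrix_transpose det_transpose)

lemma SO_mul: "A \<in> SO \<Longrightarrow> B \<in> SO \<Longrightarrow> A ** B \<in> SO"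
  by (simp add: SO_def orthogonal_matrix_mul det_mul)

lemma so_equiv: "equiv (polygon_space n l) (so_rel n l :: ((nat \<Rightarrow> real^'d) \<times> _) set)"
proof (rule equivI)
  show "so_rel n l \<subseteq> polygon_space n l \<times> polygon_space n l"
    by (auto simp: so_rel_def)
  show "refl_on (polygon_space n l) (so_rel n l :: ((nat \<Rightarrow> real^'d) \<times> _) set)"
  proof (rule refl_onI)
    fix x :: "nat \<Rightarrow> real^'d" assume "x \<in> polygon_space n l"
    then show "(x, x) \<in> so_rel n l"
      unfolding so_rel_def using SO_id by (auto intro!: bexI[of _ "mat 1"])
  qed
  show "sym (so_rel n l :: ((nat \<Rightarrow> real^'d) \<times> _) set)"
  proof (rule symI)
    fix x y :: "nat \<Rightarrow> real^'d" assume "(x, y) \<in> so_rel n l"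
    then obtain A where A: "A \<in> SO" "y = (\<lambda>i. A *v x i)" "x \<in> polygon_space n l" "y \<in> polygon_space n l"
      by (auto simp: so_rel_def)
    have "transpose A ** A = mat 1" using A(1) by (simp add: SO_def orthogonal_matrix_def)
    then have "x = (\<lambda>i. transpose A *v y i)"
      using A(2) by (simp add: matrix_vector_mul_assoc)
    then show "(y, x) \<in> so_rel n l"
      unfolding so_rel_def using A SO_transpose by blast
  qed
  show "trans (so_rel n l :: ((nat \<Rightarrow> real^'d) \<times> _) set)"
  proof (rule transI)
    fix x y z :: "nat \<Rightarrow> real^'d" assume "(x, y) \<in> so_rel n l" "(y, z) \<in> so_rel n l"
    then obtain A B where A: "A \<in> SO" "y = (\<lambda>i. A *v x i)" "x \<in> polygon_space n l"
       and B: "B \<in> SO" "z = (\<lambda>i. B *v y i)" "z \<in> polygon_space n l"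
      by (auto simp: so_rel_def)
    then have "z = (\<lambda>i. (B ** A) *v x i)" by (simp add: matrix_vector_mul_assoc)
    then show "(x, z) \<in> so_rel n l"
      unfolding so_rel_def using A B SO_mul by blast
  qed
qed

lemma poly_map:
  fixes h :: "'a::euclidean_space \<Rightarrow> 'b::euclidean_space"
  assumes "linear h" "\<And>x. norm (h x) = norm x" "P \<in> polygon_space n l"
  shows "(\<lambda>i. h (P i)) \<in> polygon_space n l"
proof -
  have "dist (h x) (h y) = dist x y" for x y
    using assms(1,2) by (simp add: dist_norm linear_diff[symmetric])
  then show ?thesis using assms by (simp add: polygon_space_def linear_0)
qed

lemma orth_norm: "orthogonal_matrix A \<Longrightarrow> norm (A *v x) = norm (x::real^'n)"
  using orthogonal_transformation_matrix[of "\<lambda>x. A *v x"]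
  by (simp add: orthogonal_transformation_norm matrix_vector_mul_linear)

lemma SO_poly: "A \<in> SO \<Longrightarrow> P \<in> polygon_space n l \<Longrightarrow> (\<lambda>i. A *v P i) \<in> polygon_space n l"
  by (rule poly_map) (auto simp: SO_def orth_norm matrix_vector_mul_linear)


lemma li_inner:
  fixes f :: "'a::real_inner \<Rightarrow> 'b::real_inner"
  assumes "lin_isometry f"
  shows "f x \<bullet> f y = x \<bullet> y"
proof -
  have lf: "linear f" and nf: "\<And>x. norm (f x) = norm x" using assms by (auto simp: lin_isometry_def)
  have "norm (f (x + y))^2 = norm (x + y)^2" by (simp add: nf)
  then have "(f x + f y) \<bullet> (f x + f y) = (x + y) \<bullet> (x + y)"
    by (simp add: linear_add[OF lf] power2_norm_eq_inner)
  moreover have "f x \<bullet> f x = x \<bullet> x" "f y \<bullet> f y = y \<bullet> y"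
    using nf by (metis power2_norm_eq_inner)+
  ultimately show ?thesis by (simp add: inner_add inner_commute)
qed

lemma li_adj:
  fixes f :: "'a::euclidean_space \<Rightarrow> 'b::euclidean_space"
  assumes "lin_isometry f"
  shows "adjoint f (f x) = x"
proof -
  have lf: "linear f" using assms by (auto simp: lin_isometry_def)
  have "y \<bullet> adjoint f (f x) = y \<bullet> x" for y
    using adjoint_works[OF lf] li_inner[OF assms] by (simp add: inner_commute)
  then have "(adjoint f (f x) - x) \<bullet> (adjoint f (f x) - x) = 0"
    by (simp add: inner_diff inner_commute)
  then show ?thesis by simp
qed

lemma li_normal:
  fixes f :: "real^'d \<Rightarrow> real^'e"
  assumes "lin_isometry f" "CARD('e) = CARD('d) + 1"
  obtains w where "norm w = 1" "\<And>y. f y \<bullet> w = 0"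
proof -
  have lf: "linear f" using assms by (auto simp: lin_isometry_def)
  have "dim (range f) \<le> DIM(real^'d)"
    using dim_image_le[OF lf, of UNIV] by simp
  then have "dim (range f) < DIM(real^'e)" using assms(2) by simp
  then obtain x where x: "x \<noteq> 0" "\<And>y. y \<in> span (range f) \<Longrightarrow> orthogonal x y"
    using orthogonal_to_subspace_exists by blast
  show ?thesis
  proof (rule that[of "x /\<^sub>R norm x"])
    show "norm (x /\<^sub>R norm x) = 1" using x by simp
    fix y
    have "orthogonal x (f y)" using x(2) span_base by blast
    then show "f y \<bullet> (x /\<^sub>R norm x) = 0" by (simp add: orthogonal_def inner_commute)
  qed
qed

lemma li_decomp:
  fixes f :: "real^'d \<Rightarrow> real^'e"
  assumes "lin_isometry f" "CARD('e) = CARD('d) + 1" "norm w = 1" "\<And>y. f y \<bullet> w = 0"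
  shows "x = f (adjoint f x) + (x \<bullet> w) *\<^sub>R w"
proof (rule ccontr)
  have lf: "linear f" using assms by (auto simp: lin_isometry_def)
  define r where "r = x - f (adjoint f x) - (x \<bullet> w) *\<^sub>R w"
  assume "x \<noteq> f (adjoint f x) + (x \<bullet> w) *\<^sub>R w"
  then have r0: "r \<noteq> 0" by (simp add: r_def algebra_simps)
  have ww: "w \<bullet> w = 1" using assms(3) by (simp add: norm_eq_1)
  have rf: "f y \<bullet> r = 0" for y
    using assms(4)[of y] adjoint_works[OF lf, of y x] li_inner[OF assms(1), of y "adjoint f x"]
    by (simp add: r_def inner_diff_right inner_commute)
  have rw: "w \<bullet> r = 0"
    using assms(4)[of "adjoint f x"] ww by (simp add: r_def inner_diff_right inner_commute)
  have inj: "inj_on f (span UNIV)"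
    by (metis inj_on_inverseI li_adj[OF assms(1)])
  have d1: "dim (range f) = CARD('d)"
    using dim_image_eq[OF lf inj] by simp
  have "w \<notin> span (range f)"
  proof
    assume "w \<in> span (range f)"
    then have "orthogonal w w"
      by (rule orthogonal_to_span) (auto simp: orthogonal_def inner_commute[of w] assms(4))
    then show False using ww by (simp add: orthogonal_def)
  qed
  then have d2: "dim (insert w (range f)) = CARD('d) + 1"
    using d1 by (simp add: dim_insert)
  have "r \<notin> span (insert w (range f))"
  proof
    assume "r \<in> span (insert w (range f))"
    then have "orthogonal r r"
      by (rule orthogonal_to_span) (auto simp: orthogonal_def inner_commute[of r] rf rw)
    then show False using r0 by (simp add: orthogonal_def)
  qed
  then have "dim (insert r (insert w (range f))) = CARD('d) + 2"
    using d2 by (simp add: dim_insert)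
  moreover have "dim (insert r (insert w (range f))) \<le> CARD('e)"
    using dim_subset_UNIV[where 'a="real^'e"] by simp
  ultimately show False using assms(2) by simp
qed

lemma sum_delta_mult: "(\<Sum>m\<in>UNIV. (if (i::'n::finite) = m then a else 0) * g m) = (a * g i :: real)"
proof -
  have "(\<Sum>m\<in>UNIV. (if i = m then a else 0) * g m) = (\<Sum>m\<in>UNIV. if i = m then a * g i else 0)"
    by (rule sum.cong) auto
  then show ?thesis by (simp add: sum.delta)
qed

lemma extend_SO:
  fixes f :: "real^'d \<Rightarrow> real^'e" and A :: "real^'d^'d"
  assumes "lin_isometry f" "CARD('e) = CARD('d) + 1" "orthogonal_matrix A"
  shows "\<exists>B\<in>SO. \<forall>y. B *v f y = f (A *v y)"
proof -
  have lf: "linear f" using assms by (auto simp: lin_isometry_def)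
  obtain w where w: "norm w = 1" "\<And>y. f y \<bullet> w = 0" using li_normal[OF assms(1,2)] by blast
  have ww: "w \<bullet> w = 1" using w(1) by (simp add: norm_eq_1)
  have w3: "w \<bullet> f y = 0" for y using w(2)[of y] by (simp add: inner_commute)
  define g where "g = adjoint f"
  have lg: "linear g" unfolding g_def by (rule adjoint_linear[OF lf])
  have dec: "x = f (g x) + (x \<bullet> w) *\<^sub>R w" for x
    unfolding g_def by (rule li_decomp[OF assms(1,2) w])
  define b where "b x = f (A *v g x) + (x \<bullet> w) *\<^sub>R w" for x
  have lb: "linear b"
    unfolding b_def
    by (rule linearI) (simp_all add: linear_add[OF lf] linear_add[OF lg] linear_scale[OF lf] linear_scale[OF lg]
         matrix_vector_right_distrib inner_add_left algebra_simps matrix_vector_mult_scaleR)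
  have nb: "norm (b x) = norm x" for x
  proof -
    have "x \<bullet> x = (f (g x) + (x \<bullet> w) *\<^sub>R w) \<bullet> (f (g x) + (x \<bullet> w) *\<^sub>R w)"
      using dec[of x] by metis
    also have "\<dots> = g x \<bullet> g x + (x \<bullet> w) * (x \<bullet> w)"
      using w(2) w3 ww by (simp add: inner_add li_inner[OF assms(1)])
    finally have e1: "x \<bullet> x = g x \<bullet> g x + (x \<bullet> w) * (x \<bullet> w)" .
    have e0: "(A *v g x) \<bullet> (A *v g x) = g x \<bullet> g x"
      using orth_norm[OF assms(3), of "g x"] by (metis power2_norm_eq_inner)
    have "b x \<bullet> b x = x \<bullet> x"
      unfolding b_def using w(2) w3 ww e0 e1 by (simp add: inner_add li_inner[OF assms(1)])
    then show ?thesis by (metis norm_eq)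
  qed
  have tb: "orthogonal_transformation b" using lb nb orthogonal_transformation by blast
  have fb: "b (f y) = f (A *v y)" for y
    unfolding b_def g_def using w(2) li_adj[OF assms(1)] by simp
  define MB where "MB = matrix b"
  have MBo: "orthogonal_matrix MB" using tb orthogonal_transformation_matrix MB_def by blast
  have MBv: "MB *v v = b v" for v unfolding MB_def using matrix_vector_mul(2)[OF lb] by metis
  show ?thesis
  proof (cases "det MB = 1")
    case True
    then show ?thesis using MBo MBv fb by (auto simp: SO_def)
  next
    case False
    then have dMB: "det MB = -1" using det_orthogonal_matrix[OF MBo] by auto
    obtain k :: 'e where True by simp
    have c2: "2 \<le> CARD('e)" using assms(2) by simp
    obtain r where r: "orthogonal_transformation r" "det (matrix r) = 1" "r w = axis k 1"
      using rotation_exists[OF c2, of w "axis k 1"] w(1) by auto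
    define R where "R = matrix r"
    have lr: "linear r" using r(1) orthogonal_transformation by blast
    have Ro: "orthogonal_matrix R" using r(1) orthogonal_transformation_matrix R_def by blast
    have Rv: "R *v v = r v" for v unfolding R_def using matrix_vector_mul(2)[OF lr] by metis
    define Dg :: "real^'e^'e" where "Dg = (\<chi> i j. if i = j then (if i = k then -1 else 1) else 0)"
    have Dgij: "Dg $ i $ j = (if i = j then (if i = k then -1 else 1) else 0)" for i j
      by (simp add: Dg_def)
    have Dgt: "transpose Dg = Dg"
      by (simp add: Dg_def vec_eq_iff transpose_def)
    have DgDg: "Dg ** Dg = mat 1"
      by (simp add: vec_eq_iff matrix_matrix_mult_def mat_def Dgij sum_delta_mult)
    have Dgo: "orthogonal_matrix Dg" using Dgt DgDg by (simp add: orthogonal_matrix_def)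
    have dDg: "det Dg = -1"
    proof -
      have "det Dg = (\<Prod>i\<in>UNIV. Dg $ i $ i)" by (rule det_diagonal) (simp add: Dg_def)
      also have "\<dots> = (\<Prod>i\<in>UNIV. if i = k then -1 else 1)" by (simp add: Dg_def)
      also have "\<dots> = -1" by (simp add: prod.If_cases)
      finally show ?thesis .
    qed
    have Dgv: "Dg *v u = u" if "u $ k = 0" for u
      using that by (simp add: vec_eq_iff matrix_vector_mult_def Dgij sum_delta_mult)
    define N where "N = MB ** (transpose R ** (Dg ** R))"
    have "N \<in> SO"
      unfolding SO_def N_def using MBo Ro Dgo dMB dDg r(2)
      by (simp add: orthogonal_matrix_mul det_mul R_def)
    moreover have "N *v f y = f (A *v y)" for y
    proof -
      have "(R *v f y) $ k = 0"
      proof -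
        have "(R *v f y) $ k = r (f y) \<bullet> r w" by (simp add: Rv r(3) inner_axis)
        also have "\<dots> = f y \<bullet> w" using r(1) by (simp add: orthogonal_transformation_def)
        finally show ?thesis using w(2) by simp
      qed
      then have "Dg *v (R *v f y) = R *v f y" by (rule Dgv)
      moreover have "transpose R ** R = mat 1" using Ro by (simp add: orthogonal_matrix_def)
      ultimately have "transpose R *v (Dg *v (R *v f y)) = f y"
        by (simp add: matrix_vector_mul_assoc)
      then show ?thesis unfolding N_def
        by (simp add: matrix_vector_mul_assoc[symmetric] MBv fb)
    qed
    ultimately show ?thesis by blast
  qed
qed

lemma phi_class:
  fixes f :: "real^'d \<Rightarrow> real^'e"
  assumes li: "lin_isometry f" and c: "CARD('e) = CARD('d) + 1" and Q: "Q \<in> polygon_space n l"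
  shows "phi n l f (so_rel n l `` {Q}) = so_rel n l `` {\<lambda>i. f (Q i)}"
proof -
  have lf: "linear f" and nf: "\<And>x. norm (f x) = norm x" using li by (auto simp: lin_isometry_def)
  have fQ: "(\<lambda>i. f (Q i)) \<in> polygon_space n l" by (rule poly_map[OF lf nf Q])
  have "(\<lambda>P. so_rel n l `` {\<lambda>i. f (P i)}) ` (so_rel n l `` {Q}) = {so_rel n l `` {\<lambda>i. f (Q i)}}"
  proof
    show "(\<lambda>P. so_rel n l `` {\<lambda>i. f (P i)}) ` (so_rel n l `` {Q}) \<subseteq> {so_rel n l `` {\<lambda>i. f (Q i)}}"
    proof
      fix X assume "X \<in> (\<lambda>P. so_rel n l `` {\<lambda>i. f (P i)}) ` (so_rel n l `` {Q})"
      then obtain P where P: "(Q, P) \<in> so_rel n l" and X: "X = so_rel n l `` {\<lambda>i. f (P i)}" by auto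
      then obtain A where A: "A \<in> SO" "P = (\<lambda>i. A *v Q i)" "P \<in> polygon_space n l"
        by (auto simp: so_rel_def)
      obtain B where B: "B \<in> SO" "\<And>y. B *v f y = f (A *v y)"
        using extend_SO[OF li c, of A] A(1) by (auto simp: SO_def)
      have fP: "(\<lambda>i. f (P i)) \<in> polygon_space n l" by (rule poly_map[OF lf nf A(3)])
      have "(\<lambda>i. f (P i)) = (\<lambda>i. B *v f (Q i))" using A(2) B(2) by simp
      then have "((\<lambda>i. f (Q i)), (\<lambda>i. f (P i))) \<in> so_rel n l"
        unfolding so_rel_def using fQ fP B(1) by blast
      then have "so_rel n l `` {\<lambda>i. f (Q i)} = so_rel n l `` {\<lambda>i. f (P i)}"
        by (rule equiv_class_eq[OF so_equiv])
      then show "X \<in> {so_rel n l `` {\<lambda>i. f (Q i)}}" using X by simp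
    qed
    have "Q \<in> so_rel n l `` {Q}" by (rule equiv_class_self[OF so_equiv Q])
    then show "{so_rel n l `` {\<lambda>i. f (Q i)}} \<subseteq> (\<lambda>P. so_rel n l `` {\<lambda>i. f (P i)}) ` (so_rel n l `` {Q})"
      by blast
  qed
  then show ?thesis unfolding phi_def by simp
qed

lemma split_vec:
  fixes D z :: "'a::euclidean_space"
  assumes D: "norm D = t" and z: "norm z = 1" "D \<bullet> z = 0"
    and ab: "\<bar>a - b\<bar> < t" "t < a + b" "0 < a" "0 < b"
  obtains x y where "norm x = a" "norm y = b" "x + y = D" "x \<bullet> z \<noteq> 0"
proof -
  have t0: "t > 0" using ab by linarith
  define \<alpha> where "\<alpha> = (a^2 - b^2 + t^2) / (2*t)"
  have n1: "(a - t - b) * (a - t + b) < 0" using ab by (intro mult_neg_pos) auto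
  have n2: "(a + t - b) * (a + t + b) > 0" using ab by (intro mult_pos_pos) auto
  have "\<alpha> < a" unfolding \<alpha>_def using t0 n1 by (simp add: divide_less_eq algebra_simps power2_eq_square)
  moreover have "-a < \<alpha>" unfolding \<alpha>_def using t0 n2 by (simp add: less_divide_eq algebra_simps power2_eq_square)
  ultimately have "(a - \<alpha>) * (a + \<alpha>) > 0" by (intro mult_pos_pos) auto
  then have pos: "a^2 - \<alpha>^2 > 0" by (simp add: algebra_simps power2_eq_square)
  define \<beta> where "\<beta> = sqrt (a^2 - \<alpha>^2)"
  have b0: "\<beta> > 0" using pos by (simp add: \<beta>_def)
  have bb: "\<beta> * \<beta> = a^2 - \<alpha>^2" using pos by (simp add: \<beta>_def)
  have DD: "D \<bullet> D = t^2" using D by (metis power2_norm_eq_inner)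
  have zz: "z \<bullet> z = 1" using z by (simp add: norm_eq_1)
  have zD: "z \<bullet> D = 0" using z by (simp add: inner_commute)
  define x where "x = (\<alpha> / t) *\<^sub>R D + \<beta> *\<^sub>R z"
  define y where "y = D - x"
  have xz: "x \<bullet> z = \<beta>" unfolding x_def using z zz by (simp add: inner_add_left)
  have xx: "x \<bullet> x = a^2"
    unfolding x_def using t0 DD zz zD z(2) bb
    by (simp add: inner_add_left inner_add_right power2_eq_square field_simps)
  have Dx: "D \<bullet> x = \<alpha> * t"
    unfolding x_def using t0 DD z(2) by (simp add: inner_add_right power2_eq_square)
  have yy: "y \<bullet> y = b^2"
  proof -
    have "y \<bullet> y = D \<bullet> D - 2 * (D \<bullet> x) + x \<bullet> x"
      unfolding y_def by (simp add: inner_diff_left inner_diff_right inner_commute)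
    also have "\<dots> = b^2"
    proof -
      have e: "\<alpha> * (2*t) = a^2 - b^2 + t^2" unfolding \<alpha>_def using t0 by simp
      have "2 * (D \<bullet> x) = \<alpha> * (2*t)" using Dx by simp
      with e have "2 * (D \<bullet> x) = a^2 - b^2 + t^2" by simp
      then show ?thesis using DD xx by linarith
    qed
    finally show ?thesis .
  qed
  show ?thesis
  proof (rule that)
    show "norm x = a" using xx ab by (metis norm_eq_sqrt_inner real_sqrt_abs abs_of_pos)
    show "norm y = b" using yy ab by (metis norm_eq_sqrt_inner real_sqrt_abs abs_of_pos)
    show "x + y = D" by (simp add: y_def)
    show "x \<bullet> z \<noteq> 0" using xz b0 by simp
  qed
qed


lemma step_lemma:
  fixes E' :: "'i \<Rightarrow> 'a::euclidean_space"
  assumes fin: "finite I'" and p: "p \<in> I'" and q: "q \<notin> I'" and s0: "sum E' I' = 0"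
    and nt: "norm (E' p) = t" and ab: "\<bar>a - b\<bar> < t" "t < a + b" "0 < a" "0 < b"
    and j: "j \<le> dim (E' ` I') + 1" "j \<le> DIM('a)" and d2: "2 \<le> DIM('a)"
  obtains x y where "norm x = a" "norm y = b" "sum (E'(p := x, q := y)) (insert q I') = 0"
    "j \<le> dim ((E'(p := x, q := y)) ` insert q I')"
proof -
  define D where "D = E' p"
  have pq: "p \<noteq> q" using p q by auto
  have gen: "sum (E'(p := x, q := y)) (insert q I') = 0 \<and> E' ` I' \<subseteq> span ((E'(p := x, q := y)) ` insert q I')
      \<and> x \<in> (E'(p := x, q := y)) ` insert q I'"
    if xy: "x + y = D" for x y
  proof (intro conjI)
    let ?E = "E'(p := x, q := y)"
    have "sum ?E (insert q I') = y + sum ?E I'" using fin q by (simp add: sum.insert)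
    also have "sum ?E I' = x + sum ?E (I' - {p})" using fin p pq by (simp add: sum.remove)
    also have "sum ?E (I' - {p}) = sum E' (I' - {p})" using q by (intro sum.cong) auto
    also have "sum E' (I' - {p}) = sum E' I' - D" using fin p by (simp add: sum.remove D_def)
    finally have eq: "sum ?E (insert q I') = y + (x + (sum E' I' - D))" .
    have "y + (x + (sum E' I' - D)) = 0" using xy s0 by (simp add: algebra_simps)
    with eq show "sum ?E (insert q I') = 0" by (rule trans)
    show "E' ` I' \<subseteq> span (?E ` insert q I')"
    proof
      fix v assume "v \<in> E' ` I'"
      then obtain i where i: "i \<in> I'" "v = E' i" by auto
      show "v \<in> span (?E ` insert q I')"
      proof (cases "i = p")
        case True
        have "x \<in> ?E ` insert q I'" using p pq by (auto intro!: image_eqI[of _ _ p])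
        moreover have "y \<in> ?E ` insert q I'" by (auto intro!: image_eqI[of _ _ q])
        ultimately have "x + y \<in> span (?E ` insert q I')" by (intro span_add span_base)
        then show ?thesis using True i xy D_def by simp
      next
        case False
        then have "v \<in> ?E ` insert q I'" using i q by (auto intro!: image_eqI[of _ _ i])
        then show ?thesis by (rule span_base)
      qed
    qed
    show "x \<in> ?E ` insert q I'" using p pq by (auto intro!: image_eqI[of _ _ p])
  qed
  have Din: "D \<in> E' ` I'" using p D_def by auto
  show ?thesis
  proof (cases "j \<le> dim (E' ` I')")
    case True
    obtain z0 where z0: "z0 \<noteq> 0" "orthogonal D z0" using orthogonal_to_vector_exists[OF d2] by blast
    define z where "z = z0 /\<^sub>R norm z0"
    have z: "norm z = 1" "D \<bullet> z = 0" using z0 by (auto simp: z_def orthogonal_def)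
    obtain x y where xy: "norm x = a" "norm y = b" "x + y = D" "x \<bullet> z \<noteq> 0"
      using split_vec[OF nt[folded D_def] z ab] by blast
    have "dim (E' ` I') \<le> dim ((E'(p := x, q := y)) ` insert q I')"
      using gen[OF xy(3)] by (intro dim_mono) auto
    then show ?thesis using that xy gen[OF xy(3)] True by auto
  next
    case False
    then have "dim (E' ` I') < DIM('a)" using j by linarith
    then obtain z0 where z0: "z0 \<noteq> 0" "\<And>v. v \<in> span (E' ` I') \<Longrightarrow> orthogonal z0 v"
      using orthogonal_to_subspace_exists by blast
    define z where "z = z0 /\<^sub>R norm z0"
    have zo: "v \<bullet> z = 0" if "v \<in> span (E' ` I')" for v
      using z0(2)[OF that] by (simp add: z_def orthogonal_def inner_commute)
    have z: "norm z = 1" "D \<bullet> z = 0" using z0 zo[OF span_base[OF Din]] by (auto simp: z_def)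
    obtain x y where xy: "norm x = a" "norm y = b" "x + y = D" "x \<bullet> z \<noteq> 0"
      using split_vec[OF nt[folded D_def] z ab] by blast
    have xn: "x \<notin> span (E' ` I')" using zo xy(4) by blast
    then have "dim (insert x (E' ` I')) = dim (E' ` I') + 1" by (simp add: dim_insert)
    moreover have "dim (insert x (E' ` I')) \<le> dim ((E'(p := x, q := y)) ` insert q I')"
      using gen[OF xy(3)] by (intro dim_mono) (auto intro: span_base)
    ultimately show ?thesis using that xy gen[OF xy(3)] j by auto
  qed
qed


lemma chain_exists:
  fixes a :: "'i \<Rightarrow> real"
  assumes "finite I" "3 \<le> card I" "\<forall>i\<in>I. 0 < a i \<and> a i < sum a (I - {i})"
    "j \<le> card I - 1" "j \<le> DIM('a::euclidean_space)" "2 \<le> DIM('a)"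
  shows "\<exists>E :: 'i \<Rightarrow> 'a. (\<forall>i\<in>I. norm (E i) = a i) \<and> sum E I = 0 \<and> j \<le> dim (E ` I)"
  using assms
proof (induction "card I" arbitrary: I a j rule: less_induct)
  case less
  note fin = less.prems(1) and pol = less.prems(3) and d2 = less.prems(6)
  show ?case
  proof (cases "card I = 3")
    case True
    then obtain p q s where I: "I = {p, q, s}" and dist: "p \<noteq> q" "q \<noteq> s" "p \<noteq> s"
      by (auto simp: card_3_iff)
    have ap: "0 < a p" "0 < a q" "0 < a s" using pol I by auto
    have t1: "a p < a q + a s" using pol[rule_format, of p] I dist by (simp add: insert_Diff_if)
    have t2: "a q < a p + a s" using pol[rule_format, of q] I dist by (simp add: insert_Diff_if)
    have t3: "a s < a p + a q" using pol[rule_format, of s] I dist by (simp add: insert_Diff_if)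
    obtain u :: 'a where u: "u \<in> Basis" using nonempty_Basis by blast
    define D where "D = a s *\<^sub>R u"
    define E' where "E' = (\<lambda>i. if i = p then D else - D)"
    have nD: "norm (E' p) = a s" using u ap by (simp add: E'_def D_def)
    have sE': "sum E' {p, s} = 0" using dist by (simp add: E'_def)
    have "D \<noteq> 0" using u ap by (simp add: D_def nonzero_Basis)
    then have "\<not> (E' ` {p, s} \<subseteq> {0})" by (auto simp: E'_def)
    then have "dim (E' ` {p, s}) \<noteq> 0" by (simp add: dim_eq_0)
    moreover have "j \<le> 2" using less.prems(4) True by simp
    ultimately have jj: "j \<le> dim (E' ` {p, s}) + 1" by linarith
    have ab: "\<bar>a p - a q\<bar> < a s" "a s < a p + a q" using t1 t2 t3 by auto
    obtain x y where xy: "norm x = a p" "norm y = a q" "sum (E'(p := x, q := y)) (insert q {p, s}) = 0"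
      "j \<le> dim ((E'(p := x, q := y)) ` insert q {p, s})"
      using step_lemma[of "{p, s}" p q E' "a s" "a p" "a q" j, OF _ _ _ sE' nD ab ap(1,2) jj less.prems(5) d2]
        dist by auto
    have Ieq: "insert q {p, s} = I" using I by auto
    show ?thesis
    proof (intro exI[of _ "E'(p := x, q := y)"] conjI)
      show "\<forall>i\<in>I. norm ((E'(p := x, q := y)) i) = a i"
        using I xy dist ap by (auto simp: E'_def D_def u)
      show "sum (E'(p := x, q := y)) I = 0" using xy Ieq by simp
      show "j \<le> dim ((E'(p := x, q := y)) ` I)" using xy Ieq by simp
    qed
  next
    case False
    then have c4: "4 \<le> card I" using less.prems(2) by linarith
    have Ine: "I \<noteq> {}" using c4 by auto
    define m where "m = Max (a ` I)"
    have "m \<in> a ` I" unfolding m_def using fin Ine by (intro Max_in) auto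
    then obtain M where M: "M \<in> I" "a M = m" by auto
    have Mmax: "a i \<le> a M" if "i \<in> I" for i using M that fin m_def by auto
    have "card (I - {M}) \<ge> 3" using c4 M by simp
    then have "I - {M} \<noteq> {}" by (metis card.empty not_numeral_le_zero)
    then obtain p where p: "p \<in> I" "p \<noteq> M" by blast
    have "card (I - {M} - {p}) \<ge> 2" using c4 M p by simp
    then have "I - {M} - {p} \<noteq> {}" by (metis card.empty not_numeral_le_zero)
    then obtain q where q: "q \<in> I" "q \<noteq> M" "q \<noteq> p" by blast
    define K where "K = I - {p, q, M}"
    have "card K \<ge> 1" using c4 M p q by (simp add: K_def card_Diff_subset)
    then have Kne: "K \<noteq> {}" by auto
    have finK: "finite K" using fin by (simp add: K_def)
    define R where "R = sum a K"
    have R0: "R > 0" unfolding R_def using finK Kne pol by (intro sum_pos) (auto simp: K_def)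
    have e1: "I - {M} = insert p (insert q K)" using p q M by (auto simp: K_def)
    have hM: "sum a (I - {M}) = a p + a q + R"
      unfolding e1 R_def using finK p q by (simp add: K_def)
    have e2: "I - {q} - {p} = insert M K" using p q M by (auto simp: K_def)
    define S where "S = a M + R"
    have hp: "sum a (I - {q} - {p}) = S"
      unfolding e2 R_def S_def using finK M by (simp add: K_def)
    have apos: "0 < a p" "0 < a q" using pol p q by auto
    have polM: "a M < sum a (I - {M})" using pol M by auto
    have "a p \<le> a M" "a q \<le> a M" using Mmax p q by auto
    define lo where "lo = max \<bar>a p - a q\<bar> (a M - R)"
    define hi where "hi = min (a p + a q) S"
    have "lo < hi" unfolding lo_def hi_def S_def using apos \<open>a p \<le> a M\<close> \<open>a q \<le> a M\<close> R0 polM hM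
      by (auto simp: abs_less_iff)
    define t where "t = (lo + hi) / 2"
    have tlo: "lo < t" and thi: "t < hi" using \<open>lo < hi\<close> by (auto simp: t_def)
    have t1: "\<bar>a p - a q\<bar> < t" "t < a p + a q" "t < S" "a M - R < t" "0 < t"
      using tlo thi unfolding lo_def hi_def by auto
    define I' where "I' = I - {q}"
    define a' where "a' = a(p := t)"
    have finI': "finite I'" using fin by (simp add: I'_def)
    have cI': "card I' = card I - 1" using q fin by (simp add: I'_def)
    have pI': "p \<in> I'" "q \<notin> I'" "M \<in> I'" using p q M by (auto simp: I'_def)
    have pol': "\<forall>i\<in>I'. 0 < a' i \<and> a' i < sum a' (I' - {i})"
    proof
      fix i assume i: "i \<in> I'"
      show "0 < a' i \<and> a' i < sum a' (I' - {i})"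
      proof (cases "i = p")
        case True
        have "sum a' (I' - {p}) = sum a (I' - {p})" by (intro sum.cong) (auto simp: a'_def)
        also have "\<dots> = S" using hp by (simp add: I'_def)
        finally show ?thesis using True t1 by (simp add: a'_def)
      next
        case False
        have "sum a' (I' - {i}) = a' p + sum a' (I' - {i} - {p})"
          using finI' pI' False by (simp add: sum.remove)
        also have "sum a' (I' - {i} - {p}) = sum a (I' - {i} - {p})"
          by (intro sum.cong) (auto simp: a'_def)
        finally have si: "sum a' (I' - {i}) = t + sum a (I' - {i} - {p})" by (simp add: a'_def)
        have ai: "a' i = a i" using False by (simp add: a'_def)
        have "0 < a i" using pol i by (auto simp: I'_def)
        moreover have "a i < t + sum a (I' - {i} - {p})"
        proof (cases "i = M")
          case True
          have "I' - {i} - {p} = K" using True by (auto simp: I'_def K_def)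
          then show ?thesis using True t1 R_def by simp
        next
          case False
          have "a M \<le> sum a (I' - {i} - {p})"
            using pI' False p \<open>p \<noteq> M\<close> finI' pol
            by (intro member_le_sum) (auto simp: I'_def less_imp_le)
          then show ?thesis using Mmax[of i] i t1 by (auto simp: I'_def)
        qed
        ultimately show ?thesis using si ai by simp
      qed
    qed
    have "\<exists>E :: 'i \<Rightarrow> 'a. (\<forall>i\<in>I'. norm (E i) = a' i) \<and> sum E I' = 0 \<and> j - 1 \<le> dim (E ` I')"
      using less.hyps[of I' a' "j - 1"] cI' c4 finI' pol' less.prems(4,5) d2 by auto
    then obtain E' :: "'i \<Rightarrow> 'a" where E': "\<forall>i\<in>I'. norm (E' i) = a' i" "sum E' I' = 0" "j - 1 \<le> dim (E' ` I')"
      by blast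
    have nt: "norm (E' p) = t" using E'(1) pI' by (simp add: a'_def)
    have jj: "j \<le> dim (E' ` I') + 1" using E'(3) by linarith
    obtain x y where xy: "norm x = a p" "norm y = a q" "sum (E'(p := x, q := y)) (insert q I') = 0"
      "j \<le> dim ((E'(p := x, q := y)) ` insert q I')"
      using step_lemma[OF finI' pI'(1,2) E'(2) nt t1(1,2) apos jj less.prems(5) d2] by blast
    have Ieq: "insert q I' = I" using q by (auto simp: I'_def)
    show ?thesis
    proof (intro exI[of _ "E'(p := x, q := y)"] conjI)
      show "\<forall>i\<in>I. norm ((E'(p := x, q := y)) i) = a i"
        using E'(1) xy by (auto simp: I'_def a'_def)
      show "sum (E'(p := x, q := y)) I = 0" using xy Ieq by simp
      show "j \<le> dim ((E'(p := x, q := y)) ` I)" using xy Ieq by simp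
    qed
  qed
qed


lemma full_polygon:
  fixes l :: "nat \<Rightarrow> real"
  assumes n3: "n \<ge> 3" and C: "int_C n l" and k: "CARD('e) \<le> n - 1" "CARD('e) \<ge> 2"
  obtains P :: "nat \<Rightarrow> real^'e" where "P \<in> polygon_space n l" "CARD('e) \<le> dim (range P)"
proof -
  have "\<exists>E :: nat \<Rightarrow> real^'e. (\<forall>i\<in>{1..n}. norm (E i) = l i) \<and> sum E {1..n} = 0 \<and> CARD('e) \<le> dim (E ` {1..n})"
    using chain_exists[of "{1..n}" l "CARD('e)", where 'a="real^'e"] n3 C k by (auto simp: int_C_def)
  then obtain E :: "nat \<Rightarrow> real^'e" where E: "\<forall>i\<in>{1..n}. norm (E i) = l i" "sum E {1..n} = 0"
    "CARD('e) \<le> dim (E ` {1..n})" by blast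
  define P where "P i = (if i < n then sum E {1..i} else 0)" for i
  have diff: "P i - P (i - 1) = E i" if i: "i \<in> {1..n}" for i
  proof (cases "i < n")
    case True
    obtain m where m: "i = Suc m" using i by (cases i) auto
    show ?thesis using True unfolding P_def m by (simp add: sum.cl_ivl_Suc)
  next
    case False
    then have "i = n" using i by auto
    obtain m where m: "n = Suc m" using n3 by (cases n) auto
    have "sum E {1..n} = sum E {1..m} + E n" unfolding m by (simp add: sum.cl_ivl_Suc)
    then have "sum E {1..m} = - E n" using E(2) by (simp add: add_eq_0_iff)
    then show ?thesis using \<open>i = n\<close> m unfolding P_def by simp
  qed
  have "P \<in> polygon_space n l"
    unfolding polygon_space_def
  proof (intro CollectI conjI allI impI ballI)
    show "P 0 = 0" using n3 by (simp add: P_def)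
    show "P i = 0" if "n \<le> i" for i using that by (simp add: P_def)
    show "dist (P i) (P (i - 1)) = l i" if "i \<in> {1..n}" for i
      using diff[OF that] E(1) that by (simp add: dist_norm)
  qed
  moreover have "CARD('e) \<le> dim (range P)"
  proof -
    have "E ` {1..n} \<subseteq> span (range P)"
    proof
      fix v assume "v \<in> E ` {1..n}"
      then obtain i where i: "i \<in> {1..n}" "v = E i" by auto
      have "P i - P (i - 1) \<in> span (range P)" by (intro span_diff span_base) auto
      then show "v \<in> span (range P)" using diff[OF i(1)] i(2) by simp
    qed
    then have "dim (E ` {1..n}) \<le> dim (range P)" by (rule dim_mono)
    then show ?thesis using E(3) by linarith
  qed
  ultimately show ?thesis using that by blast
qed


theorem proposition5p1:
  fixes n :: nat and l :: "nat \<Rightarrow> real" and f :: "real^'d \<Rightarrow> real^'e"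
  assumes "n \<ge> 3" and "CARD('d) \<ge> 2" and "CARD('e) = CARD('d) + 1"
    and "int_C n l" and "lin_isometry f"
  shows "(phi n l f ` (moduli_space n l :: (nat \<Rightarrow> real^'d) set set) = moduli_space n l)
         \<longleftrightarrow> CARD('d) \<ge> n - 1"
proof -
  have lf: "linear f" and nf: "\<And>x. norm (f x) = norm x" using assms(5) by (auto simp: lin_isometry_def)
  have cE2: "CARD('e) \<ge> 2" using assms(2,3) by simp
  have phiC: "phi n l f (so_rel n l `` {Q}) = so_rel n l `` {\<lambda>i. f (Q i)}"
    if "Q \<in> polygon_space n l" for Q :: "nat \<Rightarrow> real^'d"
    by (rule phi_class[OF assms(5,3) that])
  show ?thesis
  proof
    assume eq: "phi n l f ` (moduli_space n l :: (nat \<Rightarrow> real^'d) set set) = moduli_space n l"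
    show "CARD('d) \<ge> n - 1"
    proof (rule ccontr)
      assume "\<not> CARD('d) \<ge> n - 1"
      then have ce: "CARD('e) \<le> n - 1" using assms(3) by linarith
      obtain P :: "nat \<Rightarrow> real^'e" where P: "P \<in> polygon_space n l" "CARD('e) \<le> dim (range P)"
        using full_polygon[OF assms(1,4) ce cE2] by blast
      have "so_rel n l `` {P} \<in> moduli_space n l" unfolding moduli_space_def by (rule quotientI[OF P(1)])
      then have "so_rel n l `` {P} \<in> phi n l f ` (moduli_space n l :: (nat \<Rightarrow> real^'d) set set)"
        using eq by simp
      then obtain X where X: "X \<in> (moduli_space n l :: (nat \<Rightarrow> real^'d) set set)" "so_rel n l `` {P} = phi n l f X"
        by blast
      obtain Q where Q: "X = so_rel n l `` {Q}" "Q \<in> polygon_space n l"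
        using X(1) unfolding moduli_space_def by (auto elim: quotientE)
      have "P \<in> so_rel n l `` {P}" by (rule equiv_class_self[OF so_equiv P(1)])
      then have "P \<in> so_rel n l `` {\<lambda>i. f (Q i)}" using X(2) Q phiC by simp
      then obtain A where A: "P = (\<lambda>i. A *v f (Q i))" by (auto simp: so_rel_def)
      have "range P \<subseteq> range (\<lambda>y. A *v f y)" using A by auto
      then have "dim (range P) \<le> dim (range (\<lambda>y. A *v f y))" by (rule dim_subset)
      also have "\<dots> \<le> dim (UNIV :: (real^'d) set)"
        by (rule dim_image_le) (intro linear_compose[OF lf matrix_vector_mul_linear, unfolded o_def])
      also have "\<dots> = CARD('d)" by simp
      finally show False using P(2) assms(3) by simp
    qed
  next
    assume dn: "CARD('d) \<ge> n - 1"
    show "phi n l f ` (moduli_space n l :: (nat \<Rightarrow> real^'d) set set) = moduli_space n l"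
    proof
      show "phi n l f ` (moduli_space n l :: (nat \<Rightarrow> real^'d) set set) \<subseteq> moduli_space n l"
      proof
        fix Y assume "Y \<in> phi n l f ` (moduli_space n l :: (nat \<Rightarrow> real^'d) set set)"
        then obtain X where X: "X \<in> (moduli_space n l :: (nat \<Rightarrow> real^'d) set set)" "Y = phi n l f X" by blast
        obtain Q where Q: "X = so_rel n l `` {Q}" "Q \<in> polygon_space n l"
          using X(1) unfolding moduli_space_def by (auto elim: quotientE)
        have "(\<lambda>i. f (Q i)) \<in> polygon_space n l" by (rule poly_map[OF lf nf Q(2)])
        then show "Y \<in> moduli_space n l"
          unfolding moduli_space_def X(2) Q(1) phiC[OF Q(2)] by (rule quotientI)
      qed
      show "moduli_space n l \<subseteq> phi n l f ` (moduli_space n l :: (nat \<Rightarrow> real^'d) set set)"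
      proof
        fix Y :: "(nat \<Rightarrow> real^'e) set" assume "Y \<in> moduli_space n l"
        then obtain P where P: "Y = so_rel n l `` {P}" "P \<in> polygon_space n l"
          unfolding moduli_space_def by (auto elim: quotientE)
        have "range P \<subseteq> span (P ` {1..<n})"
        proof
          fix v assume "v \<in> range P"
          then obtain i where i: "v = P i" by auto
          show "v \<in> span (P ` {1..<n})"
          proof (cases "1 \<le> i \<and> i < n")
            case True
            then show ?thesis using i by (intro span_base) auto
          next
            case False
            then have "P i = 0" using P(2) by (cases "i = 0") (auto simp: polygon_space_def)
            then show ?thesis using i by (simp add: span_zero)
          qed
        qed
        then have "dim (range P) \<le> card (P ` {1..<n})" by (rule dim_le_card) auto
        also have "\<dots> \<le> card {1..<n}" by (rule card_image_le) auto
        finally have "dim (range P) < DIM(real^'e)" using dn assms(3) by simp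
        then obtain u0 where u0: "u0 \<noteq> 0" "\<And>y. y \<in> span (range P) \<Longrightarrow> orthogonal u0 y"
          using orthogonal_to_subspace_exists by blast
        define u where "u = u0 /\<^sub>R norm u0"
        have Pu0: "P i \<bullet> u0 = 0" for i
          using u0(2)[OF span_base[of "P i" "range P"]] by (simp add: orthogonal_def inner_commute)
        have u: "norm u = 1" "\<And>i. P i \<bullet> u = 0"
          using u0(1) Pu0 by (auto simp: u_def)
        obtain w where w: "norm w = 1" "\<And>y. f y \<bullet> w = 0" using li_normal[OF assms(5,3)] by blast
        obtain r where r: "orthogonal_transformation r" "det (matrix r) = 1" "r u = w"
          using rotation_exists[OF cE2, of u w] u(1) w(1) by auto
        have lr: "linear r" using r(1) orthogonal_transformation by blast
        have rPw: "r (P i) \<bullet> w = 0" for i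
          using r(1) u(2)[of i] unfolding r(3)[symmetric] by (simp add: orthogonal_transformation_def)
        define g where "g = adjoint f"
        have lg: "linear g" unfolding g_def by (rule adjoint_linear[OF lf])
        have dec: "r (P i) = f (g (r (P i)))" for i
          using li_decomp[OF assms(5,3) w(1) w(2), of "r (P i)"] rPw by (simp add: g_def)
        define Q where "Q i = g (r (P i))" for i
        have fQ: "(\<lambda>i. f (Q i)) = (\<lambda>i. matrix r *v P i)"
          using dec by (simp add: Q_def matrix_vector_mul(2)[OF lr])
        have Qp: "Q \<in> polygon_space n l"
          unfolding polygon_space_def
        proof (intro CollectI conjI allI impI ballI)
          show "Q 0 = 0" using P(2) by (simp add: Q_def polygon_space_def linear_0[OF lr] linear_0[OF lg])
          show "Q i = 0" if "n \<le> i" for i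
            using P(2) that by (simp add: Q_def polygon_space_def linear_0[OF lr] linear_0[OF lg])
          show "dist (Q i) (Q (i - 1)) = l i" if "i \<in> {1..n}" for i
          proof -
            have "dist (Q i) (Q (i - 1)) = dist (f (Q i)) (f (Q (i - 1)))"
              by (simp add: dist_norm linear_diff[OF lf, symmetric] nf)
            also have "\<dots> = dist (r (P i)) (r (P (i - 1)))" using dec by (simp add: Q_def)
            also have "\<dots> = dist (P i) (P (i - 1))"
              using r(1) orthogonal_transformation_isometry by blast
            finally show ?thesis using P(2) that by (simp add: polygon_space_def)
          qed
        qed
        have rSO: "matrix r \<in> SO" using r(1,2) orthogonal_transformation_matrix by (auto simp: SO_def)
        have fQp: "(\<lambda>i. f (Q i)) \<in> polygon_space n l" by (rule poly_map[OF lf nf Qp])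
        have "(P, (\<lambda>i. f (Q i))) \<in> so_rel n l"
          unfolding so_rel_def using P(2) fQp rSO fQ by blast
        then have "so_rel n l `` {P} = so_rel n l `` {\<lambda>i. f (Q i)}" by (rule equiv_class_eq[OF so_equiv])
        then have "Y = phi n l f (so_rel n l `` {Q})" using P(1) phiC[OF Qp] by simp
        moreover have "so_rel n l `` {Q} \<in> (moduli_space n l :: (nat \<Rightarrow> real^'d) set set)"
          unfolding moduli_space_def by (rule quotientI[OF Qp])
        ultimately show "Y \<in> phi n l f ` (moduli_space n l :: (nat \<Rightarrow> real^'d) set set)" by blast
      qed
    qed
  qed
qed

end
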